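(* Let $A\in\mathbb M_{N\times N}$ and $B=(b_1,\dots,b_M)\in\mathbb M_{N\times M}$ ($1\le M\le N$) satisfy $\mathrm{rank}[b_i,Ab_i,\dots,A^{N-1}b_i]=N$ for every $i=1,\dots,M$. Let $r>0$, $\bar x\in\mathbb R^N$ and $\bar\zeta\in\mathbb S^{N-1}$ be such that $$\bar x=\sum_{i=1}^M\int_0^r e^{-At}b_i\,\mathrm{sign}\big(\langle\bar\zeta,e^{-At}b_i\rangle\big)\,dt.$$ Then $$h(\bar x,\bar\zeta)=-\sum_{i=1}^M\big|\langle\bar\zeta,e^{-Ar}b_i\rangle\big|.$$
   Context: $h$ is the minimized Hamiltonian of the control system $\dot x=Ax+Bu$, $u\in[-1,1]^M$: $h(x,\zeta)=\langle\zeta,Ax\rangle+\min_{u\in[-1,1]^M}\langle\zeta,Bu\rangle$. $\mathbb S^{N-1}$ is the unit sphere. *)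

theory Defs
  imports "HOL-Analysis.Analysis"
begin

fun matpow :: "real^'n^'n \<Rightarrow> nat \<Rightarrow> real^'n^'n" where
  "matpow A 0 = mat 1"
| "matpow A (Suc k) = A ** matpow A k"

definition mexp :: "real^'n^'n \<Rightarrow> real^'n^'n" where
  "mexp A = (\<Sum>k. (1 / fact k) *\<^sub>R matpow A k)"

definition col_idx :: "'n::finite \<Rightarrow> nat" where
  "col_idx = (SOME f. bij_betw f (UNIV::'n set) {..<CARD('n)})"

definition kalman :: "real^'n^'n \<Rightarrow> real^'n \<Rightarrow> real^'n^'n" where
  "kalman A b = (\<chi> i j. (matpow A (col_idx j) *v b) $ i)"

definition ham :: "real^'n^'n \<Rightarrow> real^'m^'n \<Rightarrow> real^'n \<Rightarrow> real^'n \<Rightarrow> real" where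
  "ham A B x z = z \<bullet> (A *v x) + Inf {z \<bullet> (B *v u) | u. \<forall>i. \<bar>u $ i\<bar> \<le> 1}"

end

theory Submission
  imports Defs "HOL-Complex_Analysis.Complex_Analysis"
begin


lemma summ_gen:
  fixes y :: "'a::{real_normed_field,banach}"
  assumes b: "\<And>k. \<bar>c k\<bar> \<le> C * D^k / fact k" and C: "C \<ge> 0" and D: "D \<ge> 0"
  shows "summable (\<lambda>k. of_real (c k) * y^k)"
proof (rule summable_comparison_test)
  show "\<exists>N. \<forall>n\<ge>N. norm (of_real (c n) * y^n) \<le> C * (inverse (fact n) * (D * norm y)^n)"
  proof (intro exI allI impI)
    fix n :: nat
    have "norm (of_real (c n) * y^n) = \<bar>c n\<bar> * norm y ^ n" by (simp add: norm_mult norm_power)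
    also have "\<dots> \<le> C * D^n / fact n * norm y ^ n" by (rule mult_right_mono[OF b]) simp
    also have "\<dots> = C * (inverse (fact n) * (D * norm y)^n)" by (simp add: field_simps power_mult_distrib)
    finally show "norm (of_real (c n) * y^n) \<le> C * (inverse (fact n) * (D * norm y)^n)" .
  qed
  show "summable (\<lambda>n. C * (inverse (fact n) * (D * norm y)^n))"
    by (intro summable_mult summable_exp)
qed

lemma abs_deriv:
  fixes g :: "real \<Rightarrow> real"
  assumes d: "(g has_real_derivative g') (at t)" and nz: "g t \<noteq> 0"
  shows "((\<lambda>s. \<bar>g s\<bar>) has_real_derivative sgn (g t) * g') (at t)"
proof -
  have cont: "isCont g t" using d by (rule DERIV_isCont)
  have ev: "eventually (\<lambda>s. \<bar>g s\<bar> = sgn (g t) * g s) (nhds t)"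
  proof (cases "g t > 0")
    case True
    have "eventually (\<lambda>s. g s > 0) (nhds t)"
      using order_tendstoD(1)[OF cont[unfolded isCont_def tendsto_at_iff_tendsto_nhds] True] .
    then show ?thesis by eventually_elim (use True in auto)
  next
    case False
    then have neg: "g t < 0" using nz by auto
    have "eventually (\<lambda>s. g s < 0) (nhds t)"
      using order_tendstoD(2)[OF cont[unfolded isCont_def tendsto_at_iff_tendsto_nhds] neg] .
    then show ?thesis by eventually_elim (use neg in auto)
  qed
  have "((\<lambda>s. sgn (g t) * g s) has_real_derivative sgn (g t) * g') (at t)"
    by (intro DERIV_cmult d)
  then show ?thesis using DERIV_cong_ev[OF refl ev refl] by simp
qed

lemma t1: fixes a B :: real assumes "\<bar>a\<bar> \<le> B"
  shows "\<bar>a * (-1)^k / fact k\<bar> \<le> B / fact k"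
  using assms by (simp add: abs_mult power_abs divide_right_mono)
lemma t2: fixes p :: "nat \<Rightarrow> real"
  shows "p k / fact k * (-t)^k = p k * (-1)^k / fact k * t^k"
  by (simp add: power_minus[of t])
lemma t3: fixes p :: "nat \<Rightarrow> real"
  shows "diffs (\<lambda>k. p k * (-1)^k / fact k) k * t^k = - (p (Suc k) / fact k * (-t)^k)"
proof -
  have "diffs (\<lambda>k. p k * (-1)^k / fact k) k = of_nat (Suc k) * (p (Suc k) * (-1)^(Suc k) / (of_nat (Suc k) * fact k))"
    unfolding diffs_def by (simp only: fact_Suc of_nat_mult)
  also have "\<dots> = - (p (Suc k) * (-1)^k / fact k)" by simp
  finally show ?thesis by (simp add: power_minus[of t])
qed

lemma core:
  fixes p :: "nat \<Rightarrow> real"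
  assumes bnd: "\<And>k. \<bar>p k\<bar> \<le> C * D^k" and C: "C \<ge> 0" and D: "D \<ge> 0" and r: "r \<ge> 0"
  shows "((\<lambda>t. sgn (\<Sum>k. p k / fact k * (-t)^k) * (\<Sum>k. p (Suc k) / fact k * (-t)^k))
          has_integral (\<bar>\<Sum>k. p k / fact k * (-0)^k\<bar> - \<bar>\<Sum>k. p k / fact k * (-r)^k\<bar>)) {0..r}"
proof -
  define g where "g = (\<lambda>t::real. \<Sum>k. p k / fact k * (-t)^k)"
  define g2 where "g2 = (\<lambda>t::real. \<Sum>k. p (Suc k) / fact k * (-t)^k)"
  define c where "c = (\<lambda>k. p k * (-1)^k / fact k)"
  have cb: "\<bar>c k\<bar> \<le> C * D^k / fact k" for k
    unfolding c_def by (rule t1[OF bnd])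
  have summ: "summable (\<lambda>k. of_real (c k) * y^k)" for y :: "'a::{real_normed_field,banach}"
    by (rule summ_gen[OF cb C D])
  have summR: "summable (\<lambda>k. c k * y^k)" for y :: real
    using summ[of y] by simp
  have gc: "g t = (\<Sum>k. c k * t^k)" for t
    unfolding g_def c_def t2 ..
  have dc: "diffs c k * t^k = - (p (Suc k) / fact k * (-t)^k)" for k t
    unfolding c_def by (rule t3)
  have summ2: "summable (\<lambda>k. p (Suc k) / fact k * (-t)^k)" for t
  proof -
    have b2: "\<bar>p (Suc k) * (-1)^k / fact k\<bar> \<le> (C*D) * D^k / fact k" for k
      using t1[OF bnd[of "Suc k"], of k] by (simp add: mult.assoc)
    have s1: "summable (\<lambda>k. of_real (p (Suc k) * (-1)^k / fact k) * t^k)"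
      by (rule summ_gen[OF b2 mult_nonneg_nonneg[OF C D] D])
    have e: "(\<lambda>k. of_real (p (Suc k) * (-1)^k / fact k) * t^k) = (\<lambda>k. p (Suc k) / fact k * (-t)^k)"
      by (rule ext) (simp add: power_minus[of t])
    show ?thesis using s1 unfolding e .
  qed
  have g2d: "g2 t = - (\<Sum>k. diffs c k * t^k)" for t
    unfolding dc g2_def suminf_minus[OF summ2] by simp
  have deriv: "(g has_real_derivative - g2 t) (at t)" for t
  proof -
    have "((\<lambda>t. \<Sum>k. c k * t^k) has_real_derivative (\<Sum>k. diffs c k * t^k)) (at t)"
      by (rule termdiffs_strong_converges_everywhere, rule summR)
    moreover have "(\<lambda>t. \<Sum>k. c k * t^k) = g" using gc by auto
    ultimately show ?thesis using g2d by simp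
  qed
  have contg: "continuous_on S g" for S
    using deriv DERIV_isCont continuous_at_imp_continuous_on by blast
  define Z where "Z = {t\<in>{0..r}. g t = 0}"
  have alt: "finite Z \<or> (\<forall>t. g t = 0)"
  proof (cases "finite Z")
    case True then show ?thesis ..
  next
    case inf: False
    define G where "G = (\<lambda>z::complex. \<Sum>k. of_real (c k) * z^k)"
    have Gd: "(G has_field_derivative (\<Sum>k. diffs (\<lambda>k. of_real (c k)) k * z^k)) (at z)" for z
      unfolding G_def by (rule termdiffs_strong_converges_everywhere, rule summ)
    have hol: "G holomorphic_on UNIV"
      using Gd holomorphic_on_def field_differentiable_def field_differentiable_at_within by blast
    have Gr: "G (of_real t) = of_real (g t)" for t
    proof -
      have "G (of_real t) = (\<Sum>k. of_real (c k * t^k))" unfolding G_def by simp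
      also have "\<dots> = of_real (\<Sum>k. c k * t^k)" by (rule suminf_of_real[OF summR, symmetric])
      finally show ?thesis by (simp add: gc)
    qed
    obtain \<xi> where "\<xi> \<in> {0..r}" and lim: "\<xi> islimpt Z"
      using Heine_Borel_imp_Bolzano_Weierstrass[OF compact_Icc inf] Z_def by blast
    then obtain f where f: "\<And>n. f n \<in> Z - {\<xi>}" and ft: "f \<longlonglongrightarrow> \<xi>"
      using islimpt_sequential by blast
    have "(complex_of_real \<xi>) islimpt (of_real ` Z)"
      unfolding islimpt_sequential
    proof (intro exI conjI allI)
      show "complex_of_real (f n) \<in> of_real ` Z - {complex_of_real \<xi>}" for n using f[of n] by auto
      show "(\<lambda>n. complex_of_real (f n)) \<longlonglongrightarrow> complex_of_real \<xi>"
        using ft by (rule tendsto_of_real)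
    qed
    then have "G w = 0" for w
      by (rule analytic_continuation[OF hol open_UNIV connected_UNIV subset_UNIV UNIV_I])
         (auto simp: Gr Z_def)
    then have "\<forall>t. g t = 0" using Gr by (metis of_real_eq_0_iff)
    then show ?thesis ..
  qed
  have "((\<lambda>t. sgn (g t) * g2 t) has_integral (\<bar>g 0\<bar> - \<bar>g r\<bar>)) {0..r}"
    using alt
  proof
    assume fin: "finite Z"
    have "((\<lambda>t. sgn (g t) * - g2 t) has_integral (\<bar>g r\<bar> - \<bar>g 0\<bar>)) {0..r}"
    proof (rule fundamental_theorem_of_calculus_interior_strong[OF fin r])
      show "((\<lambda>s. \<bar>g s\<bar>) has_vector_derivative sgn (g t) * - g2 t) (at t)" if "t \<in> {0<..<r} - Z" for t
        using that abs_deriv[OF deriv] Z_def has_real_derivative_iff_has_vector_derivative by auto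
      show "continuous_on {0..r} (\<lambda>s. \<bar>g s\<bar>)"
        by (intro continuous_intros contg)
    qed
    from has_integral_neg[OF this] show ?thesis by simp
  next
    assume z: "\<forall>t. g t = 0"
    then show ?thesis by simp
  qed
  then show ?thesis unfolding g_def g2_def .
qed



lemma matpow_Suc_vec: "matpow A (Suc k) *v y = A *v (matpow A k *v y)"
  by (simp add: matrix_vector_mul_assoc)

lemma matpow_scale_vec:
  fixes A :: "real^'n^'n"
  shows "matpow (c *\<^sub>R A) k *v y = c^k *\<^sub>R (matpow A k *v y)"
proof (induction k)
  case 0 then show ?case by simp
next
  case (Suc k)
  have "matpow (c *\<^sub>R A) (Suc k) *v y = (c *\<^sub>R A) *v (c^k *\<^sub>R (matpow A k *v y))"
    by (simp only: matpow_Suc_vec Suc)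
  also have "\<dots> = c *\<^sub>R (A *v (c^k *\<^sub>R (matpow A k *v y)))"
    by (simp only: scaleR_matrix_vector_assoc)
  also have "\<dots> = c^(Suc k) *\<^sub>R (matpow A (Suc k) *v y)"
    by (simp del: matpow.simps add: matrix_vector_mult_scaleR matpow_Suc_vec)
  finally show ?case .
qed

lemma matpow_bound:
  fixes A :: "real^'n^'n"
  assumes "\<And>y. norm (A *v y) \<le> D * norm y" "D \<ge> 0"
  shows "norm (matpow A k *v y) \<le> D^k * norm y"
proof (induction k)
  case 0 then show ?case by simp
next
  case (Suc k)
  have "norm (matpow A (Suc k) *v y) \<le> D * norm (matpow A k *v y)"
    unfolding matpow_Suc_vec by (rule assms(1))
  also have "\<dots> \<le> D * (D^k * norm y)" by (rule mult_left_mono[OF Suc assms(2)])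
  finally show ?case by simp
qed

lemma obtain_D:
  fixes A :: "real^'n^'n"
  obtains D where "D \<ge> 0" "\<And>y. norm (A *v y) \<le> D * norm y"
proof -
  obtain K where "K \<ge> 0" "\<And>x. norm (A *v x) \<le> norm x * K"
    using bounded_linear.nonneg_bounded[OF matrix_vector_mul_bounded_linear[of A]] by blast
  then show ?thesis using that[of K] by (simp add: mult.commute)
qed

lemma matnorm_bound:
  fixes X :: "real^'n^'n"
  shows "norm X \<le> (\<Sum>i\<in>(UNIV::'n set). \<Sum>j\<in>UNIV. norm (X *v axis j 1))"
proof -
  have "norm X \<le> (\<Sum>i\<in>UNIV. norm (X $ i))"
    unfolding norm_vec_def by (rule L2_set_le_sum) simp
  also have "\<dots> \<le> (\<Sum>i\<in>(UNIV::'n set). \<Sum>j\<in>UNIV. norm (X *v axis j 1))"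
  proof (rule sum_mono)
    fix i
    have "norm (X $ i) \<le> (\<Sum>j\<in>UNIV. \<bar>X $ i $ j\<bar>)" by (rule norm_le_l1_cart)
    also have "\<dots> \<le> (\<Sum>j\<in>UNIV. norm (X *v axis j 1))"
    proof (rule sum_mono)
      fix j
      have "X $ i $ j = (X *v axis j 1) $ i"
        by (simp add: matrix_vector_mult_basis column_def)
      then show "\<bar>X $ i $ j\<bar> \<le> norm (X *v axis j 1)" by (simp add: component_le_norm_cart)
    qed
    finally show "norm (X $ i) \<le> (\<Sum>j\<in>UNIV. norm (X *v axis j 1))" .
  qed
  finally show ?thesis .
qed

lemma matpow_norm_bound:
  fixes M :: "real^'n^'n"
  assumes "\<And>y. norm (M *v y) \<le> D * norm y" "D \<ge> 0"
  shows "norm (matpow M k) \<le> real (CARD('n) * CARD('n)) * D^k"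
proof -
  have "norm (matpow M k) \<le> (\<Sum>i\<in>(UNIV::'n set). \<Sum>j\<in>(UNIV::'n set). D^k)"
  proof (rule order_trans[OF matnorm_bound], intro sum_mono)
    fix j :: 'n
    show "norm (matpow M k *v axis j 1) \<le> D^k" using matpow_bound[OF assms, of k "axis j 1"] by simp
  qed
  then show ?thesis by simp
qed

lemma mexp_summable:
  fixes M :: "real^'n^'n"
  shows "summable (\<lambda>k. (1 / fact k) *\<^sub>R matpow M k)"
proof -
  obtain D where D: "D \<ge> 0" "\<And>y. norm (M *v y) \<le> D * norm y" using obtain_D by blast
  define K where "K = real (CARD('n) * CARD('n))"
  show ?thesis
  proof (rule summable_comparison_test)
    show "\<exists>N. \<forall>n\<ge>N. norm ((1 / fact n) *\<^sub>R matpow M n) \<le> K * (inverse (fact n) * D^n)"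
      using matpow_norm_bound[OF D(2) D(1)] by (auto simp: K_def field_simps)
    show "summable (\<lambda>n. K * (inverse (fact n) * D^n))" by (intro summable_mult summable_exp)
  qed
qed

lemma mexp_linear:
  fixes M :: "real^'n^'n" and L :: "real^'n^'n \<Rightarrow> real"
  assumes "bounded_linear L"
  shows "L (mexp M) = (\<Sum>k. (1 / fact k) * L (matpow M k))"
  unfolding mexp_def bounded_linear.suminf[OF assms mexp_summable]
  using linear.scaleR[OF bounded_linear.linear[OF assms]] by simp

lemma bl_mv: "bounded_linear (\<lambda>X::real^'n^'n. X *v (b::real^'n))"
proof -
  have "linear (\<lambda>X::real^'n^'n. X *v b)"
    by (rule linearI) (simp_all add: matrix_vector_mult_add_rdistrib scaleR_matrix_vector_assoc)
  then show ?thesis by (rule linear_conv_bounded_linear[THEN iffD1])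
qed

lemma E1:
  fixes A :: "real^'n^'n"
  shows "z \<bullet> (mexp (- (t *\<^sub>R A)) *v b) = (\<Sum>k. (z \<bullet> (matpow A k *v b)) / fact k * (-t)^k)"
proof -
  have bl: "bounded_linear (\<lambda>X::real^'n^'n. z \<bullet> (X *v b))"
    by (rule bounded_linear_compose[OF bounded_linear_inner_right bl_mv])
  have m: "- (t *\<^sub>R A) = (-t) *\<^sub>R A" by simp
  show ?thesis
    unfolding mexp_linear[OF bl] m matpow_scale_vec
    by (rule suminf_cong) (simp add: inner_scaleR_right)
qed

lemma E2:
  fixes A :: "real^'n^'n"
  shows "z \<bullet> (A *v (mexp (- (t *\<^sub>R A)) *v b)) = (\<Sum>k. (z \<bullet> (matpow A (Suc k) *v b)) / fact k * (-t)^k)"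
proof -
  have bl: "bounded_linear (\<lambda>X::real^'n^'n. z \<bullet> (A *v (X *v b)))"
    by (rule bounded_linear_compose[OF bounded_linear_inner_right
        bounded_linear_compose[OF matrix_vector_mul_bounded_linear bl_mv]])
  have m: "- (t *\<^sub>R A) = (-t) *\<^sub>R A" by simp
  show ?thesis
    unfolding mexp_linear[OF bl] m matpow_scale_vec matpow_Suc_vec
    by (rule suminf_cong) (simp add: inner_scaleR_right matrix_vector_mult_scaleR)
qed



lemma ps_cont:
  fixes p :: "nat \<Rightarrow> real"
  assumes bnd: "\<And>k. \<bar>p k\<bar> \<le> C * D^k" and C: "C \<ge> 0" and D: "D \<ge> 0"
  shows "continuous_on S (\<lambda>t. \<Sum>k. p k / fact k * (-t)^k)"
proof -
  define c where "c = (\<lambda>k. p k * (-1)^k / fact k)"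
  have cb: "\<bar>c k\<bar> \<le> C * D^k / fact k" for k
    unfolding c_def by (rule t1[OF bnd])
  have summR: "summable (\<lambda>k. c k * y^k)" for y :: real
    using summ_gen[OF cb C D, of y] by simp
  have gc: "(\<lambda>t. \<Sum>k. p k / fact k * (-t)^k) = (\<lambda>t. \<Sum>k. c k * t^k)"
    unfolding c_def t2 ..
  have "isCont (\<lambda>t. \<Sum>k. c k * t^k) t" for t
    by (rule DERIV_isCont, rule termdiffs_strong_converges_everywhere, rule summR)
  then show ?thesis unfolding gc by (simp add: continuous_at_imp_continuous_on)
qed

lemma pbound:
  fixes A :: "real^'n^'n"
  assumes "\<And>y. norm (A *v y) \<le> D * norm y" "D \<ge> 0"
  shows "\<bar>z \<bullet> (matpow A k *v b)\<bar> \<le> (norm z * norm b) * D^k"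
proof -
  have "\<bar>z \<bullet> (matpow A k *v b)\<bar> \<le> norm z * norm (matpow A k *v b)" by (rule Cauchy_Schwarz_ineq2)
  also have "\<dots> \<le> norm z * (D^k * norm b)" by (rule mult_left_mono[OF matpow_bound[OF assms]]) simp
  finally show ?thesis by (simp add: ac_simps)
qed

lemma Icc_leb: "{0..(r::real)} \<in> sets lebesgue"
  by simp

lemma per_col:
  fixes A :: "real^'n^'n" and b z :: "real^'n"
  assumes r: "r \<ge> 0"
  shows "z \<bullet> (A *v integral {0..r} (\<lambda>t. sgn (z \<bullet> (mexp (- (t *\<^sub>R A)) *v b)) *\<^sub>R (mexp (- (t *\<^sub>R A)) *v b)))
       = \<bar>z \<bullet> b\<bar> - \<bar>z \<bullet> (mexp (- (r *\<^sub>R A)) *v b)\<bar>"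
proof -
  obtain D where D: "D \<ge> 0" "\<And>y. norm (A *v y) \<le> D * norm y" using obtain_D by blast
  define v where "v = (\<lambda>t. mexp (- (t *\<^sub>R A)) *v b)"
  define p where "p = (\<lambda>k. z \<bullet> (matpow A k *v b))"
  define g where "g = (\<lambda>t::real. \<Sum>k. p k / fact k * (-t)^k)"
  define g2 where "g2 = (\<lambda>t::real. \<Sum>k. p (Suc k) / fact k * (-t)^k)"
  have pb: "\<bar>p k\<bar> \<le> (norm z * norm b) * D^k" for k
    unfolding p_def by (rule pbound[OF D(2) D(1)])
  have F1: "z \<bullet> v t = g t" for t unfolding v_def g_def p_def by (rule E1)
  have F2: "z \<bullet> (A *v v t) = g2 t" for t unfolding v_def g2_def p_def by (rule E2)
  have F3: "g 0 = z \<bullet> b" unfolding g_def minus_zero powser_zero p_def by simp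
  have F4: "((\<lambda>t. sgn (g t) * g2 t) has_integral (\<bar>g 0\<bar> - \<bar>g r\<bar>)) {0..r}"
    unfolding g_def g2_def using core[OF pb _ D(1) r] by simp
  have contg: "continuous_on S g" for S
    unfolding g_def by (rule ps_cont[OF pb _ D(1)]) simp
  have contv: "continuous_on S v" for S
  proof -
    have comp: "continuous_on S (\<lambda>t. v t $ j)" for j
    proof -
      have "v t $ j = (\<Sum>k. (axis j 1 \<bullet> (matpow A k *v b)) / fact k * (-t)^k)" for t
        unfolding v_def E1[symmetric] by (simp add: inner_axis')
      then have e: "(\<lambda>t. v t $ j) = (\<lambda>t. \<Sum>k. (axis j 1 \<bullet> (matpow A k *v b)) / fact k * (-t)^k)" by auto
      show ?thesis unfolding e
        by (rule ps_cont[OF pbound[OF D(2) D(1)] _ D(1)]) simp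
    qed
    have "continuous_on S (\<lambda>t. \<chi> j. v t $ j)" by (intro continuous_on_vec_lambda comp)
    then show ?thesis by simp
  qed
  define \<phi> where "\<phi> = (\<lambda>t. sgn (z \<bullet> v t) *\<^sub>R v t)"
  have meas: "\<phi> \<in> borel_measurable (lebesgue_on {0..r})"
  proof -
    have m1: "(\<lambda>t. z \<bullet> v t) \<in> borel_measurable (lebesgue_on {0..r})"
      by (rule continuous_imp_measurable_on_sets_lebesgue[OF _ Icc_leb]) (intro continuous_intros contv)
    have m2: "v \<in> borel_measurable (lebesgue_on {0..r})"
      by (rule continuous_imp_measurable_on_sets_lebesgue[OF contv Icc_leb])
    show ?thesis unfolding \<phi>_def
      by (rule borel_measurable_scaleR[OF measurable_compose[OF m1 borel_measurable_sgn] m2])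
  qed
  obtain Kb where Kb: "\<And>t. t \<in> {0..r} \<Longrightarrow> norm (v t) \<le> Kb"
    using compact_imp_bounded[OF compact_continuous_image[OF contv compact_Icc[of 0 r]]]
    unfolding bounded_iff by (metis image_eqI)
  have int: "\<phi> integrable_on {0..r}"
  proof (rule measurable_bounded_by_integrable_imp_integrable[OF meas _ _ Icc_leb])
    show "(\<lambda>t. Kb) integrable_on {0..r}" by (rule integrable_const_ivl)
    fix t assume t: "t \<in> {0..r}"
    have s: "\<bar>sgn (z \<bullet> v t)\<bar> \<le> 1" by (simp add: sgn_real_def)
    have "norm (\<phi> t) = \<bar>sgn (z \<bullet> v t)\<bar> * norm (v t)" unfolding \<phi>_def by simp
    also have "\<dots> \<le> 1 * norm (v t)" by (rule mult_right_mono[OF s]) simp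
    also have "\<dots> \<le> Kb" using Kb[OF t] by simp
    finally show "norm (\<phi> t) \<le> Kb" .
  qed
  define h where "h = (\<lambda>y::real^'n. z \<bullet> (A *v y))"
  have blh: "bounded_linear h"
    unfolding h_def by (rule bounded_linear_compose[OF bounded_linear_inner_right matrix_vector_mul_bounded_linear])
  have "h (integral {0..r} \<phi>) = integral {0..r} (h \<circ> \<phi>)"
    by (rule integral_linear[OF int blh, symmetric])
  also have "(h \<circ> \<phi>) = (\<lambda>t. sgn (g t) * g2 t)"
    unfolding h_def \<phi>_def by (rule ext) (simp add: matrix_vector_mult_scaleR F1 F2)
  also have "integral {0..r} (\<lambda>t. sgn (g t) * g2 t) = \<bar>g 0\<bar> - \<bar>g r\<bar>"
    using F4 by (rule integral_unique)
  finally show ?thesis unfolding h_def \<phi>_def v_def F3 using F1[of r] v_def by simp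
qed



lemma inner_Bu:
  fixes B :: "real^'m^'n"
  shows "z \<bullet> (B *v u) = (\<Sum>i\<in>UNIV. u $ i * (z \<bullet> column i B))"
  by (simp add: matrix_mult_sum inner_sum_right scalar_mult_eq_scaleR)

lemma inf_val:
  fixes B :: "real^'m^'n"
  shows "Inf {z \<bullet> (B *v u) | u. \<forall>i. \<bar>u $ i\<bar> \<le> 1} = - (\<Sum>i\<in>UNIV. \<bar>z \<bullet> column i B\<bar>)"
proof (rule cInf_eq_minimum)
  define u0 :: "real^'m" where "u0 = (\<chi> i. - sgn (z \<bullet> column i B))"
  have "z \<bullet> (B *v u0) = (\<Sum>i\<in>UNIV. - \<bar>z \<bullet> column i B\<bar>)"
    unfolding inner_Bu u0_def by (intro sum.cong refl) (simp add: abs_sgn)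
  moreover have "\<forall>i. \<bar>u0 $ i\<bar> \<le> 1" unfolding u0_def by (simp add: sgn_real_def)
  ultimately show "- (\<Sum>i\<in>UNIV. \<bar>z \<bullet> column i B\<bar>) \<in> {z \<bullet> (B *v u) | u. \<forall>i. \<bar>u $ i\<bar> \<le> 1}"
    by (simp add: sum_negf) (metis)
next
  fix x assume "x \<in> {z \<bullet> (B *v u) | u. \<forall>i. \<bar>u $ i\<bar> \<le> 1}"
  then obtain u :: "real^'m" where x: "x = z \<bullet> (B *v u)" and u: "\<forall>i. \<bar>u $ i\<bar> \<le> 1" by blast
  have "(\<Sum>i\<in>UNIV. - \<bar>z \<bullet> column i B\<bar>) \<le> (\<Sum>i\<in>UNIV. u $ i * (z \<bullet> column i B))"
  proof (rule sum_mono)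
    fix i
    have "\<bar>u $ i * (z \<bullet> column i B)\<bar> \<le> 1 * \<bar>z \<bullet> column i B\<bar>"
      unfolding abs_mult by (rule mult_right_mono[OF u[rule_format]]) simp
    then show "- \<bar>z \<bullet> column i B\<bar> \<le> u $ i * (z \<bullet> column i B)" by linarith
  qed
  then show "- (\<Sum>i\<in>UNIV. \<bar>z \<bullet> column i B\<bar>) \<le> x" unfolding x inner_Bu by (simp add: sum_negf)
qed

theorem lemma4p2:
  fixes A :: "real^'n^'n" and B :: "real^'m^'n"
    and r :: real and xbar zbar :: "real^'n"
  assumes "CARD('m) \<le> CARD('n)"
    and "\<forall>i. rank (kalman A (column i B)) = CARD('n)"
    and "r > 0"
    and "norm zbar = 1"
    and "xbar = (\<Sum>i\<in>UNIV. integral {0..r}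
            (\<lambda>t. sgn (zbar \<bullet> (mexp (- (t *\<^sub>R A)) *v column i B))
                   *\<^sub>R (mexp (- (t *\<^sub>R A)) *v column i B)))"
  shows "ham A B xbar zbar = - (\<Sum>i\<in>UNIV. \<bar>zbar \<bullet> (mexp (- (r *\<^sub>R A)) *v column i B)\<bar>)"
proof -
  define h where "h = (\<lambda>y::real^'n. zbar \<bullet> (A *v y))"
  have blh: "bounded_linear h"
    unfolding h_def by (rule bounded_linear_compose[OF bounded_linear_inner_right matrix_vector_mul_bounded_linear])
  define I where "I = (\<lambda>i. integral {0..r}
            (\<lambda>t. sgn (zbar \<bullet> (mexp (- (t *\<^sub>R A)) *v column i B))
                   *\<^sub>R (mexp (- (t *\<^sub>R A)) *v column i B)))"
  have "h xbar = (\<Sum>i\<in>UNIV. h (I i))"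
    unfolding assms(5) I_def[symmetric] by (rule linear_sum[OF bounded_linear.linear[OF blh]])
  also have "\<dots> = (\<Sum>i\<in>UNIV. \<bar>zbar \<bullet> column i B\<bar> - \<bar>zbar \<bullet> (mexp (- (r *\<^sub>R A)) *v column i B)\<bar>)"
    unfolding h_def I_def using per_col[of r zbar A] assms(3) by simp
  finally have hx: "zbar \<bullet> (A *v xbar) = (\<Sum>i\<in>UNIV. \<bar>zbar \<bullet> column i B\<bar>) - (\<Sum>i\<in>UNIV. \<bar>zbar \<bullet> (mexp (- (r *\<^sub>R A)) *v column i B)\<bar>)"
    unfolding h_def by (simp add: sum_subtractf)
  show ?thesis unfolding ham_def inf_val hx by simp
qed

end
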